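(* Let $\Lambda$ be the function defined below. If $0<\beta<\frac{\pi}{2}$, then $$D_{\beta,0}=\min_{\{\theta:\frac{1}{11}\beta\le\theta\le 2\beta\}}\Lambda(\beta,\theta),$$ while if $\frac{\pi}{2}\le\beta<\infty$, then $$D_{\beta,0}=\min_{\{\theta:\frac{1}{7}\le\theta\le\pi\}}\Lambda(\beta,\theta).$$
   Context: Let $\mathcal{H}=\{(x,v)\in\mathbb{R}^2:v\ge 0\}$ and let $d_H$ be the Riemannian distance on $\mathcal{H}$ induced by the metric $ds^2=v^{-1}(dx^2+dv^2)$ on the open upper half-plane (extended to the boundary $v=0$ as the infimum of lengths of curves). For $\beta,\gamma\in\mathbb{R}$ let $L_{\beta,\gamma}=\{(x,v)\in\mathcal{H}:x=\beta+\gamma v,\ v\ge0\}$ and $$D_{\beta,\gamma}=\inf\Big\{\tfrac{1}{2}d_H((0,1),(x,v))^2:(x,v)\in L_{\beta,\gamma}\Big\}.$$ Define, for $\theta\ne0$ and $x$ with $2(\theta-\sin\theta)x+2(1-\cos\theta)-\theta^2\ge0$, $$\Lambda(x,\theta)=\frac{\theta^2}{(\theta-\sin\theta)^2}\Big[(\theta-\sin\theta)x+2(1-\cos\theta)-\theta\sin\theta-(1-\cos\theta)\sqrt{2(\theta-\sin\theta)x+2(1-\cos\theta)-\theta^2}\Big],$$ with the nonnegative square root. *)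

theory Defs
  imports "HOL-Analysis.Analysis"
begin

definition HP :: "(real \<times> real) set" where
  "HP = {p. snd p \<ge> 0}"

definition admissible_curve :: "(real \<Rightarrow> real \<times> real) \<Rightarrow> real \<times> real \<Rightarrow> real \<times> real \<Rightarrow> bool" where
  "admissible_curve g p q \<longleftrightarrow>
     g piecewise_C1_differentiable_on {0..1} \<and> g 0 = p \<and> g 1 = q \<and>
     (\<forall>t\<in>{0<..<1}. snd (g t) > 0)"

text \<open>Riemannian length w.r.t. ds^2 = v^{-1}(dx^2+dv^2): integrand |g'(t)| / sqrt(v(t)).\<close>
definition has_H_length :: "(real \<Rightarrow> real \<times> real) \<Rightarrow> real \<Rightarrow> bool" where
  "has_H_length g L \<longleftrightarrow>
     ((\<lambda>t. norm (vector_derivative g (at t)) / sqrt (snd (g t))) has_integral L) {0..1}"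

definition dH :: "real \<times> real \<Rightarrow> real \<times> real \<Rightarrow> real" where
  "dH p q = Inf {L. \<exists>g. admissible_curve g p q \<and> has_H_length g L}"

definition Lline :: "real \<Rightarrow> real \<Rightarrow> (real \<times> real) set" where
  "Lline \<beta> \<gamma> = {(x, v). v \<ge> 0 \<and> x = \<beta> + \<gamma> * v}"

definition Dfun :: "real \<Rightarrow> real \<Rightarrow> real" where
  "Dfun \<beta> \<gamma> = Inf {(1/2) * (dH (0, 1) p)\<^sup>2 | p. p \<in> Lline \<beta> \<gamma>}"

definition Lambda :: "real \<Rightarrow> real \<Rightarrow> real" where
  "Lambda x \<theta> = \<theta>\<^sup>2 / (\<theta> - sin \<theta>)\<^sup>2 *
     ((\<theta> - sin \<theta>) * x + 2 * (1 - cos \<theta>) - \<theta> * sin \<theta>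
      - (1 - cos \<theta>) * sqrt (2 * (\<theta> - sin \<theta>) * x + 2 * (1 - cos \<theta>) - \<theta>\<^sup>2))"

end

theory Submission
  imports Defs
begin


definition Dd :: "real \<Rightarrow> real" where "Dd w = w + sin w * cos w"
definition Uf :: "real \<Rightarrow> real" where "Uf w = (cos w)^2 / Dd w"
definition om :: "real \<Rightarrow> real" where "om y = (THE w. 0 < w \<and> w \<le> pi/2 \<and> Uf w = y)"

lemma Dd_pos: assumes "0 < w" "w \<le> pi/2" shows "Dd w > 0"
proof -
  have "sin w \<ge> 0" using assms by (intro sin_ge_zero) auto
  moreover have "cos w \<ge> 0" using assms by (intro cos_ge_zero) auto
  ultimately show ?thesis using assms unfolding Dd_def by (simp add: add_pos_nonneg)
qed

lemma Dd_mono: assumes "a \<le> b" shows "Dd a \<le> Dd b"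
proof (rule DERIV_nonneg_imp_nondecreasing[OF assms])
  fix x
  have "DERIV Dd x :> 1 + (cos x * cos x - sin x * sin x)"
    unfolding Dd_def by (auto intro!: derivative_eq_intros)
  moreover have "1 + (cos x * cos x - sin x * sin x) \<ge> 0"
    using sin_cos_squared_add[of x] by (simp add: power2_eq_square) (smt (verit) zero_le_square)
  ultimately show "\<exists>y. DERIV Dd x :> y \<and> y \<ge> 0" by blast
qed

lemma Uf_strict: assumes "0 < a" "a < b" "b \<le> pi/2" shows "Uf b < Uf a"
proof -
  have cb: "cos b < cos a" using assms by (intro cos_monotone_0_pi) auto
  have "cos b \<ge> 0" using assms by (intro cos_ge_zero) auto
  hence c2: "(cos b)^2 < (cos a)^2" using cb by (simp add: power_strict_mono)
  have da: "Dd a > 0" using assms by (intro Dd_pos) auto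
  have dab: "Dd a \<le> Dd b" using assms by (intro Dd_mono) auto
  have "(cos b)^2 / Dd b \<le> (cos b)^2 / Dd a"
    using da dab by (intro divide_left_mono) auto
  also have "\<dots> < (cos a)^2 / Dd a" using c2 da by (simp add: divide_strict_right_mono)
  finally show ?thesis unfolding Uf_def .
qed

lemma Uf_cont: assumes "0 < w" "w \<le> pi/2" shows "isCont Uf w"
  using Dd_pos[OF assms] unfolding Uf_def Dd_def by (auto intro!: continuous_intros)

lemma Uf_nonneg: "Uf w \<ge> 0" if "0 < w" "w \<le> pi/2"
  using Dd_pos[OF that] unfolding Uf_def by simp

lemma Uf_pi2: "Uf (pi/2) = 0" unfolding Uf_def by simp

lemma Uf_large: assumes "y \<ge> 0" shows "\<exists>a. 0 < a \<and> a \<le> pi/3 \<and> Uf a \<ge> y"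
proof -
  define a where "a = min (pi/3) (1/(8*(y+1)))"
  have a0: "0 < a" "a \<le> pi/3" "a \<le> 1/(8*(y+1))" using assms pi_gt3 unfolding a_def by auto
  have "cos a \<ge> cos (pi/3)" using a0 by (intro cos_monotone_0_pi_le) auto
  hence c: "cos a \<ge> 1/2" by (simp add: cos_60)
  have "sin a \<le> a" using a0 by (simp add: sin_x_le_x)
  moreover have "sin a \<ge> 0" using a0 pi_gt3 by (intro sin_ge_zero) auto
  ultimately have "sin a * cos a \<le> a" using mult_left_le[of "cos a" "sin a"] by simp
  hence d: "Dd a \<le> 2*a" unfolding Dd_def by simp
  have dp: "Dd a > 0" using a0 pi_gt3 by (intro Dd_pos) auto
  have "1/4 \<le> (cos a)^2" using c mult_mono[of "1/2" "cos a" "1/2" "cos a"] by (simp add: power2_eq_square)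
  hence "1/4 / (2*a) \<le> (cos a)^2 / Dd a"
    using d dp by (intro frac_le) auto
  moreover have "y \<le> 1/4/(2*a)"
  proof -
    have "8*(y+1)*a \<le> 1" using a0 assms by (simp add: field_simps)
    hence "y + 1 \<le> 1/(8*a)" using a0 by (simp add: le_divide_eq algebra_simps)
    thus ?thesis by simp
  qed
  ultimately show ?thesis using a0 unfolding Uf_def by (intro exI[of _ a]) auto
qed

lemma om_ex: assumes "y \<ge> 0" shows "0 < om y \<and> om y \<le> pi/2 \<and> Uf (om y) = y"
proof -
  obtain a where a: "0 < a" "a \<le> pi/3" "Uf a \<ge> y" using Uf_large[OF assms] by blast
  have "\<exists>x. a \<le> x \<and> x \<le> pi/2 \<and> Uf x = y"
    using a assms pi_gt3 by (intro IVT2) (auto simp: Uf_pi2 intro!: Uf_cont)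
  then obtain w where w: "a \<le> w" "w \<le> pi/2" "Uf w = y" by blast
  hence w0: "0 < w" using a by linarith
  have uniq: "w' = w" if "0 < w'" "w' \<le> pi/2" "Uf w' = y" for w'
  proof (rule ccontr)
    assume "w' \<noteq> w"
    hence "w' < w \<or> w < w'" by linarith
    thus False
    proof
      assume "w' < w" thus False using Uf_strict[of w' w] that w by simp
    next
      assume "w < w'" thus False using Uf_strict[of w w'] that w w0 by simp
    qed
  qed
  have "0 < om y \<and> om y \<le> pi/2 \<and> Uf (om y) = y" unfolding om_def
  proof (rule theI[of _ w])
    show "0 < w \<and> w \<le> pi/2 \<and> Uf w = y" using w w0 by blast
  next
    fix x assume "0 < x \<and> x \<le> pi/2 \<and> Uf x = y" thus "x = w" using uniq by blast
  qed
  thus ?thesis .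
qed

lemma om_Uf: assumes "0 < w" "w \<le> pi/2" shows "om (Uf w) = w"
proof -
  have "Uf w \<ge> 0" using Uf_nonneg assms by auto
  from om_ex[OF this] have h: "0 < om (Uf w)" "om (Uf w) \<le> pi/2" "Uf (om (Uf w)) = Uf w" by auto
  show ?thesis
  proof (rule ccontr)
    assume "om (Uf w) \<noteq> w"
    hence "om (Uf w) < w \<or> w < om (Uf w)" by linarith
    thus False
    proof
      assume "om (Uf w) < w" thus False using Uf_strict[of "om (Uf w)" w] h assms by simp
    next
      assume "w < om (Uf w)" thus False using Uf_strict[of w "om (Uf w)"] h assms by simp
    qed
  qed
qed


definition Ud :: "real \<Rightarrow> real" where
  "Ud w = - 2 * cos w * (sin w * w + cos w) / (Dd w)^2"

lemma Uf_deriv: assumes "0 < w" "w \<le> pi/2" shows "DERIV Uf w :> Ud w"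
proof -
  have d: "Dd w \<noteq> 0" using Dd_pos[OF assms] by simp
  have "DERIV (\<lambda>w. (cos w)^2 / (w + sin w * cos w)) w :>
     ((2 * cos w * (- sin w)) * (w + sin w * cos w) - (cos w)^2 * (1 + (cos w * cos w - sin w * sin w)))
       / (w + sin w * cos w)^2"
    using d unfolding Dd_def by (auto intro!: derivative_eq_intros simp: power2_eq_square)
  moreover have "((2 * cos w * (- sin w)) * (w + sin w * cos w) - (cos w)^2 * (1 + (cos w * cos w - sin w * sin w)))
       / (w + sin w * cos w)^2 = Ud w"
  proof -
    have s: "sin w * sin w = 1 - cos w * cos w" using sin_cos_squared_add[of w] by (simp add: power2_eq_square)
    have "(2 * cos w * (- sin w)) * (w + sin w * cos w) - (cos w)^2 * (1 + (cos w * cos w - sin w * sin w))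
       = - 2 * cos w * (sin w * w + cos w)" using s unfolding power2_eq_square by algebra
    thus ?thesis unfolding Ud_def Dd_def by simp
  qed
  ultimately show ?thesis unfolding Uf_def[abs_def] Dd_def by simp
qed

lemma Ud_neg: assumes "0 < w" "w < pi/2" shows "Ud w < 0"
proof -
  have c: "cos w > 0" using assms by (intro cos_gt_zero) auto
  have s: "sin w \<ge> 0" using assms by (intro sin_ge_zero) auto
  have "sin w * w + cos w > 0" using c s assms by (simp add: add_nonneg_pos)
  moreover have "(Dd w)^2 > 0" using Dd_pos[of w] assms by simp
  ultimately show ?thesis unfolding Ud_def using c by (simp add: divide_neg_pos)
qed

lemma om_zero: "om 0 = pi/2"
  using om_Uf[of "pi/2"] by (simp add: Uf_pi2)

lemma om_lt: assumes "y > 0" shows "om y < pi/2"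
proof -
  have "om y \<noteq> pi/2"
  proof
    assume h: "om y = pi/2"
    have "Uf (om y) = 0" unfolding h by (rule Uf_pi2)
    thus False using om_ex[of y] assms by simp
  qed
  thus ?thesis using om_ex[of y] assms by auto
qed

lemma om_cont: "continuous_on {0..} om"
proof (clarsimp simp: continuous_on_eq_continuous_within)
  fix y0 :: real assume y0: "0 \<le> y0"
  obtain a where a: "0 < a" "a \<le> pi/3" "Uf a \<ge> y0 + 1" using Uf_large[of "y0+1"] y0 by auto
  have cu: "continuous_on {a..pi/2} Uf"
    using a by (intro continuous_at_imp_continuous_on) (auto intro!: Uf_cont)
  have inv: "\<forall>x\<in>{a..pi/2}. om (Uf x) = x" using a by (auto intro!: om_Uf)
  have "continuous_on (Uf ` {a..pi/2}) om" by (rule continuous_on_inv[OF cu compact_Icc inv])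
  moreover have "{0..Uf a} \<subseteq> Uf ` {a..pi/2}"
  proof
    fix y assume y: "y \<in> {0..Uf a}"
    have h: "0 < om y" "om y \<le> pi/2" "Uf (om y) = y" using om_ex[of y] y by auto
    have "om y \<ge> a"
    proof (rule ccontr)
      assume "\<not> a \<le> om y"
      hence "Uf a < Uf (om y)" using Uf_strict[of "om y" a] h a pi_gt3 by simp
      thus False using h y by simp
    qed
    thus "y \<in> Uf ` {a..pi/2}" using h by (metis atLeastAtMost_iff image_eqI)
  qed
  ultimately have "continuous_on {0..Uf a} om" by (rule continuous_on_subset)
  hence "continuous (at y0 within {0..Uf a}) om"
    using y0 a by (simp add: continuous_on_eq_continuous_within)
  moreover have "at y0 within {0..} = at y0 within {0..Uf a}"
    by (rule at_within_nhd[of _ "{..<Uf a}"]) (use y0 a in auto)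
  ultimately show "continuous (at y0 within {0..}) om" by simp
qed

lemma om_isCont: assumes "y > 0" shows "isCont om y"
proof -
  have "continuous_on {0<..} om" using om_cont by (rule continuous_on_subset) auto
  thus ?thesis using assms by (simp add: continuous_on_eq_continuous_at)
qed

lemma om_deriv: assumes "y > 0" shows "DERIV om y :> inverse (Ud (om y))"
proof (rule DERIV_inverse_function[where a=0 and b="y+1"])
  show "DERIV Uf (om y) :> Ud (om y)" using om_ex[of y] assms by (intro Uf_deriv) auto
  show "Ud (om y) \<noteq> 0" using Ud_neg[of "om y"] om_ex[of y] om_lt[OF assms] assms by auto
  show "\<And>z. 0 < z \<Longrightarrow> z < y + 1 \<Longrightarrow> Uf (om z) = z" using om_ex by auto
  show "isCont om y" using om_isCont[OF assms] .
qed (use assms in auto)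


definition Qf :: "real \<Rightarrow> real" where "Qf w = w^2 / Dd w"
definition Qd :: "real \<Rightarrow> real" where "Qd w = 2 * w * sin w * (w * sin w + cos w) / (Dd w)^2"

lemma Qf_deriv: assumes "0 < w" "w \<le> pi/2" shows "DERIV Qf w :> Qd w"
proof -
  have d: "Dd w \<noteq> 0" using Dd_pos[OF assms] by simp
  have "DERIV (\<lambda>w. w^2 / (w + sin w * cos w)) w :>
     ((2 * w) * (w + sin w * cos w) - w^2 * (1 + (cos w * cos w - sin w * sin w)))
       / (w + sin w * cos w)^2"
    using d unfolding Dd_def by (auto intro!: derivative_eq_intros simp: power2_eq_square)
  moreover have "((2 * w) * (w + sin w * cos w) - w^2 * (1 + (cos w * cos w - sin w * sin w)))
       / (w + sin w * cos w)^2 = Qd w"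
  proof -
    have s: "sin w * sin w = 1 - cos w * cos w" using sin_cos_squared_add[of w] by (simp add: power2_eq_square)
    have "(2 * w) * (w + sin w * cos w) - w^2 * (1 + (cos w * cos w - sin w * sin w))
       = 2 * w * sin w * (w * sin w + cos w)" using s unfolding power2_eq_square by algebra
    thus ?thesis unfolding Qd_def Dd_def by simp
  qed
  ultimately show ?thesis unfolding Qf_def[abs_def] Dd_def by simp
qed

definition Sfun :: "real \<Rightarrow> real \<times> real \<Rightarrow> real" where
  "Sfun b p = 2 * sqrt ((b - fst p) * Qf (om (snd p / (b - fst p))))"

lemma S_deriv:
  assumes dX: "DERIV X t :> X'" and dV: "DERIV V t :> V'" and xb: "X t < b" and v0: "V t > 0"
  shows "DERIV (\<lambda>t. Sfun b (X t, V t)) t :>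
           - (cos (om (V t / (b - X t))) * X' + sin (om (V t / (b - X t))) * V') / sqrt (V t)"
proof -
  define r where "r = b - X t"
  define u where "u = V t / r"
  define w where "w = om u"
  define c where "c = cos w"
  define s where "s = sin w"
  define D where "D = Dd w"
  have r0: "r > 0" using xb unfolding r_def by simp
  have u0: "u > 0" using v0 r0 unfolding u_def by simp
  have w: "0 < w" "w < pi/2" "Uf w = u" using om_ex[of u] om_lt[OF u0] u0 unfolding w_def by auto
  have c0: "c > 0" using w unfolding c_def by (intro cos_gt_zero) auto
  have s0: "s \<ge> 0" using w unfolding s_def by (intro sin_ge_zero) auto
  have D0: "D > 0" using Dd_pos[of w] w unfolding D_def by auto
  have Dsc: "D = w + s * c" unfolding D_def Dd_def s_def c_def by simp
  have uc: "u = c^2 / D" using w unfolding Uf_def c_def D_def by simp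
  have VDr: "V t * D = c^2 * r" using uc r0 D0 unfolding u_def by (simp add: field_simps)
  have sc1: "s^2 + c^2 = 1" unfolding s_def c_def by simp
  define U' where "U' = (V' * r + V t * X') / r^2"
  have dU: "DERIV (\<lambda>t. V t / (b - X t)) t :> U'"
    unfolding U'_def r_def using dX dV xb by (auto intro!: derivative_eq_intros simp: power2_eq_square)
  have dW: "DERIV (\<lambda>t. om (V t / (b - X t))) t :> inverse (Ud w) * U'"
  proof -
    have "DERIV om (V t / (b - X t)) :> inverse (Ud w)"
      using om_deriv[OF u0] unfolding w_def u_def r_def .
    from DERIV_chain2[OF this dU] show ?thesis by (simp add: mult.commute)
  qed
  have dQ: "DERIV (\<lambda>t. Qf (om (V t / (b - X t)))) t :> Qd w * (inverse (Ud w) * U')"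
  proof -
    have "DERIV Qf (om (V t / (b - X t))) :> Qd w"
      using Qf_deriv[of w] w unfolding w_def u_def r_def by simp
    from DERIV_chain2[OF this dW] show ?thesis .
  qed
  define R where "R = r * Qf w"
  define R' where "R' = - X' * Qf w + r * (Qd w * (inverse (Ud w) * U'))"
  have dR: "DERIV (\<lambda>t. (b - X t) * Qf (om (V t / (b - X t)))) t :> R'"
    unfolding R'_def using dQ dX
    by (auto intro!: derivative_eq_intros simp: r_def u_def w_def)
  have Rpos: "R > 0" unfolding R_def Qf_def using r0 w D0 D_def by simp
  have Rval: "R = V t * w^2 / c^2"
    unfolding R_def Qf_def D_def[symmetric] using VDr c0 D0 by (simp add: field_simps)
  have sqR: "sqrt R = sqrt (V t) * w / c"
  proof -
    have "R = (sqrt (V t) * w / c)^2" using Rval v0 by (simp add: power_divide power_mult_distrib)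
    thus ?thesis using v0 w c0 by simp
  qed
  have key: "Qd w * inverse (Ud w) = - w * s / c"
  proof -
    have p: "s * w + c > 0" using c0 s0 w by (simp add: add_nonneg_pos)
    have ud: "Ud w \<noteq> 0" unfolding Ud_def s_def[symmetric] c_def[symmetric] D_def[symmetric]
      using p c0 D0 by simp
    have "Qd w = (- w * s / c) * Ud w"
      unfolding Qd_def Ud_def s_def[symmetric] c_def[symmetric] D_def[symmetric]
      using c0 D0 by (simp add: field_simps)
    thus ?thesis using ud by simp
  qed
  have R'val: "R' = - X' * w - w * s / c * V'"
  proof -
    have "R' = - X' * Qf w + r * ((- w * s / c) * U')" unfolding R'_def using key by (simp add: mult.assoc[symmetric])
    also have "\<dots> = - X' * w^2 / D - w * s / c * V' - w * s / c * (V t / r) * X'"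
      unfolding U'_def Qf_def D_def[symmetric] using r0 c0 by (simp add: field_simps power2_eq_square)
    also have "\<dots> = - X' * w^2 / D - w * s / c * V' - w * s * c / D * X'"
      using uc c0 unfolding u_def by (simp add: power2_eq_square)
    also have "\<dots> = - X' * w * (w + s * c) / D - w * s / c * V'"
      using D0 by (simp add: field_simps power2_eq_square)
    also have "\<dots> = - X' * w - w * s / c * V'" using Dsc D0 by simp
    finally show ?thesis .
  qed
  have "DERIV (\<lambda>t. 2 * sqrt ((b - X t) * Qf (om (V t / (b - X t))))) t :> 2 * (inverse (sqrt R) / 2 * R')"
  proof -
    have "DERIV sqrt ((b - X t) * Qf (om (V t / (b - X t)))) :> inverse (sqrt R) / 2"
      using DERIV_real_sqrt[OF Rpos] unfolding R_def r_def u_def w_def .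
    from DERIV_cmult[OF DERIV_chain2[OF this dR], of 2] show ?thesis .
  qed
  moreover have "2 * (inverse (sqrt R) / 2 * R') = - (c * X' + s * V') / sqrt (V t)"
    unfolding sqR R'val using c0 w v0 by (simp add: field_simps)
  ultimately show ?thesis unfolding Sfun_def c_def s_def w_def u_def r_def by simp
qed


lemma Qf_le: assumes "0 < w" "w \<le> pi/2" shows "Qf w \<le> pi/2" "Qf w \<ge> 0"
proof -
  have D0: "Dd w > 0" using Dd_pos[OF assms] .
  have "sin w \<ge> 0" "cos w \<ge> 0" using assms by (auto intro!: sin_ge_zero cos_ge_zero)
  hence Dw: "Dd w \<ge> w" unfolding Dd_def by simp
  have "Qf w = w * (w / Dd w)" unfolding Qf_def by (simp add: power2_eq_square)
  also have "\<dots> \<le> w * 1" using Dw D0 assms by (intro mult_left_mono) auto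
  finally show "Qf w \<le> pi/2" using assms by simp
  show "Qf w \<ge> 0" unfolding Qf_def using D0 by simp
qed

lemma Sfun_bound: assumes "x < b" "0 \<le> v"
  shows "0 \<le> Sfun b (x, v)" "Sfun b (x, v) \<le> 2 * sqrt ((b - x) * (pi/2))"
proof -
  have u: "v / (b - x) \<ge> 0" using assms by simp
  have w: "0 < om (v/(b-x))" "om (v/(b-x)) \<le> pi/2" using om_ex[OF u] by auto
  have q: "Qf (om (v/(b-x))) \<le> pi/2" "Qf (om (v/(b-x))) \<ge> 0" using Qf_le[OF w] by auto
  show "0 \<le> Sfun b (x, v)" unfolding Sfun_def using q assms by simp
  have "(b - x) * Qf (om (v/(b-x))) \<le> (b - x) * (pi/2)" using q assms by (intro mult_left_mono) auto
  hence "sqrt ((b - x) * Qf (om (v/(b-x)))) \<le> sqrt ((b - x) * (pi/2))" by simp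
  thus "Sfun b (x, v) \<le> 2 * sqrt ((b - x) * (pi/2))" unfolding Sfun_def by simp
qed

lemma Qf_isCont: assumes "0 < w" "w \<le> pi/2" shows "isCont Qf w"
  using Dd_pos[OF assms] unfolding Qf_def Dd_def by (auto intro!: continuous_intros)

lemma Qf_cont: "continuous_on {0<..pi/2} Qf"
  by (intro continuous_at_imp_continuous_on ballI Qf_isCont) auto

lemma Sfun_cont:
  assumes cg: "continuous_on A g" and xb: "\<And>t. t \<in> A \<Longrightarrow> fst (g t) < b"
    and vn: "\<And>t. t \<in> A \<Longrightarrow> snd (g t) \<ge> 0"
  shows "continuous_on A (\<lambda>t. Sfun b (g t))"
proof -
  have cu: "continuous_on A (\<lambda>t. snd (g t) / (b - fst (g t)))"
    using cg xb by (intro continuous_intros) (auto)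
  have im: "(\<lambda>t. snd (g t) / (b - fst (g t))) ` A \<subseteq> {0..}"
  proof (rule image_subsetI)
    fix t assume t: "t \<in> A"
    have "fst (g t) < b" "snd (g t) \<ge> 0" using xb[OF t] vn[OF t] by auto
    thus "snd (g t) / (b - fst (g t)) \<in> {0..}" by simp
  qed
  have co: "continuous_on A (\<lambda>t. om (snd (g t) / (b - fst (g t))))"
    by (rule continuous_on_compose2[OF om_cont cu im])
  have im2: "(\<lambda>t. om (snd (g t) / (b - fst (g t)))) ` A \<subseteq> {0<..pi/2}"
    using om_ex im by fastforce
  have cq: "continuous_on A (\<lambda>t. Qf (om (snd (g t) / (b - fst (g t)))))"
    by (rule continuous_on_compose2[OF Qf_cont co im2])
  show ?thesis unfolding Sfun_def
    by (intro continuous_on_mult continuous_on_const continuous_on_real_sqrt continuous_on_diff continuous_on_fst cg cq)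
qed

lemma vd_fst: "(g has_vector_derivative D) (at t) \<Longrightarrow> DERIV (\<lambda>t. fst (g t)) t :> fst D"
  unfolding has_real_derivative_iff_has_vector_derivative has_vector_derivative_def
  by (drule has_derivative_fst) simp

lemma vd_snd: "(g has_vector_derivative D) (at t) \<Longrightarrow> DERIV (\<lambda>t. snd (g t)) t :> snd D"
  unfolding has_real_derivative_iff_has_vector_derivative has_vector_derivative_def
  by (drule has_derivative_snd) simp

lemma cs_ineq: assumes "c^2 + s^2 = 1" shows "c * a + s * b \<le> sqrt (a^2 + b^2)"
proof (rule real_le_rsqrt)
  have "(c*a+s*b)^2 + (c*b - s*a)^2 = (c^2+s^2)*(a^2+b^2)" by algebra
  hence "(c*a+s*b)^2 + (c*b - s*a)^2 = a^2+b^2" using assms by simp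
  moreover have "0 \<le> (c*b - s*a)^2" by simp
  ultimately show "(c*a+s*b)^2 \<le> a^2 + b^2" by linarith
qed




lemma lower_piece:
  fixes g :: "real \<Rightarrow> real \<times> real"
  assumes cg: "continuous_on {0..1} g" and S0: "finite S0"
    and gdiff: "\<And>t. t \<in> {0..1} - S0 \<Longrightarrow> (g has_vector_derivative vector_derivative g (at t)) (at t)"
    and vnn: "\<And>t. t \<in> {0..1} \<Longrightarrow> snd (g t) \<ge> 0"
    and fE: "finite E" and vpos: "\<And>t. t \<in> {0..1} - E \<Longrightarrow> snd (g t) > 0"
    and HL: "has_H_length g L"
    and s: "0 \<le> s" "s \<le> 1" and below: "\<And>t. t \<in> {0..s} \<Longrightarrow> fst (g t) < b"
  shows "Sfun b (g 0) - Sfun b (g s) \<le> L"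
proof -
  define f where "f t = norm (vector_derivative g (at t)) / sqrt (snd (g t))" for t
  have fint: "(f has_integral L) {0..1}" using HL unfolding has_H_length_def f_def[abs_def] .
  have fnn: "f t \<ge> 0" if "t \<in> {0..1}" for t unfolding f_def using vnn[OF that] by simp
  have cgs: "continuous_on {0..s} g" by (rule continuous_on_subset[OF cg]) (use s in auto)
  define h where "h t = Sfun b (g t)" for t
  define w where "w t = om (snd (g t) / (b - fst (g t)))" for t
  define h' where "h' t = - (cos (w t) * fst (vector_derivative g (at t)) + sin (w t) * snd (vector_derivative g (at t))) / sqrt (snd (g t))" for t
  have hc: "continuous_on {0..s} h" unfolding h_def
    by (rule Sfun_cont[OF cgs]) (use below vnn s in auto)
  have hd: "(h has_vector_derivative h' t) (at t)" if t: "t \<in> {0<..<s} - (E \<union> S0)" for t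
  proof -
    have t1: "t \<in> {0..1} - S0" "t \<in> {0..1} - E" using t s by auto
    have gd: "(g has_vector_derivative vector_derivative g (at t)) (at t)" using gdiff t1 by blast
    have "DERIV (\<lambda>t. Sfun b (fst (g t), snd (g t))) t :> h' t"
      unfolding h'_def w_def
      by (rule S_deriv[OF vd_fst[OF gd] vd_snd[OF gd]]) (use below t vpos[OF t1(2)] in auto)
    thus ?thesis unfolding h_def has_real_derivative_iff_has_vector_derivative by simp
  qed
  have "(h' has_integral (h s - h 0)) {0..s}"
    by (rule fundamental_theorem_of_calculus_interior_strong[where S="E \<union> S0", OF _ s(1) hd hc]) (use fE S0 in auto)
  from has_integral_neg[OF this] have hi: "((\<lambda>t. - h' t) has_integral (h 0 - h s)) {0..s}"
    by simp
  define k where "k t = (if t \<in> E \<union> S0 \<union> {0, s} then f t else - h' t)" for t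
  have ki: "(k has_integral (h 0 - h s)) {0..s}"
    by (rule has_integral_spike_finite[OF _ _ hi, of "E \<union> S0 \<union> {0, s}"]) (use fE S0 in \<open>auto simp: k_def\<close>)
  have fi: "f integrable_on {0..s}"
    using integrable_subinterval_real[OF has_integral_integrable[OF fint]] s by auto
  have kf: "k t \<le> f t" if t: "t \<in> {0..s}" for t
  proof (cases "t \<in> E \<union> S0 \<union> {0, s}")
    case True thus ?thesis by (simp add: k_def)
  next
    case False
    hence t1: "t \<in> {0..1} - E" using t s by auto
    have v0: "snd (g t) > 0" using vpos[OF t1] .
    define a where "a = fst (vector_derivative g (at t))"
    define bb where "bb = snd (vector_derivative g (at t))"
    have "cos (w t) * a + sin (w t) * bb \<le> sqrt (a^2 + bb^2)" by (rule cs_ineq) simp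
    also have "sqrt (a^2 + bb^2) = norm (vector_derivative g (at t))"
    proof -
      have "vector_derivative g (at t) = (a, bb)" unfolding a_def bb_def by simp
      thus ?thesis by (simp add: norm_Pair)
    qed
    finally have "cos (w t) * a + sin (w t) * bb \<le> norm (vector_derivative g (at t))" .
    hence "(cos (w t) * a + sin (w t) * bb) / sqrt (snd (g t)) \<le> norm (vector_derivative g (at t)) / sqrt (snd (g t))"
      using v0 by (intro divide_right_mono) auto
    moreover have "k t = (cos (w t) * a + sin (w t) * bb) / sqrt (snd (g t))"
      using False unfolding k_def h'_def a_def bb_def by (simp add: minus_divide_left)
    ultimately show ?thesis unfolding f_def by simp
  qed
  have "h 0 - h s \<le> integral {0..s} f"
    by (rule has_integral_le[OF ki integrable_integral[OF fi] kf])
  also have "integral {0..s} f \<le> L"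
    by (rule has_integral_subset_le[OF _ integrable_integral[OF fi] fint]) (use s fnn in auto)
  finally show ?thesis unfolding h_def .
qed

lemma lower_bound:
  fixes g :: "real \<Rightarrow> real \<times> real"
  assumes b0: "0 < b" and pc: "g piecewise_C1_differentiable_on {0..1}"
    and g0: "g 0 = (0, 1)" and g1: "fst (g 1) = b"
    and vnn: "\<And>t. t \<in> {0..1} \<Longrightarrow> snd (g t) \<ge> 0"
    and fE: "finite E" and vpos: "\<And>t. t \<in> {0..1} - E \<Longrightarrow> snd (g t) > 0"
    and HL: "has_H_length g L"
  shows "Sfun b (0, 1) \<le> L"
proof -
  obtain S0 where S0: "finite S0" "g C1_differentiable_on ({0..1} - S0)" and cg: "continuous_on {0..1} g"
    using pc unfolding piecewise_C1_differentiable_on_def by blast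
  have gdiff: "(g has_vector_derivative vector_derivative g (at t)) (at t)" if "t \<in> {0..1} - S0" for t
    using S0(2) that unfolding C1_differentiable_on_eq by (auto simp: vector_derivative_works)
  have cx: "continuous_on {0..1} (\<lambda>t. fst (g t))" using cg by (intro continuous_intros)
  define T where "T = {0..1} \<inter> (\<lambda>t. fst (g t)) -` {b..}"
  have cT: "closed T" unfolding T_def by (rule continuous_closed_preimage[OF cx]) auto
  have T1: "1 \<in> T" unfolding T_def using g1 by auto
  have bT: "bdd_below T" unfolding T_def by (rule bdd_belowI[of _ 0]) auto
  define \<tau> where "\<tau> = Inf T"
  have tT: "\<tau> \<in> T" unfolding \<tau>_def using closed_contains_Inf[OF _ bT cT] T1 by blast
  hence t01: "0 \<le> \<tau>" "\<tau> \<le> 1" and xt: "fst (g \<tau>) \<ge> b" unfolding T_def by auto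
  have bel: "fst (g t) < b" if "0 \<le> t" "t < \<tau>" for t
  proof (rule ccontr)
    assume "\<not> fst (g t) < b"
    hence "t \<in> T" unfolding T_def using that t01 by auto
    hence "\<tau> \<le> t" unfolding \<tau>_def using bT by (rule cInf_lower)
    thus False using that by simp
  qed
  have tpos: "\<tau> > 0"
  proof (rule ccontr)
    assume "\<not> \<tau> > 0" hence "\<tau> = 0" using t01 by simp
    thus False using xt g0 b0 by simp
  qed
  show ?thesis
  proof (rule field_le_epsilon)
    fix e :: real assume e: "0 < e"
    define \<eta> where "\<eta> = e^2 / (2 * pi)"
    have eta: "\<eta> > 0" unfolding \<eta>_def using e by simp
    obtain \<delta> where d: "\<delta> > 0" and dd: "\<And>t. t \<in> {0..1} \<Longrightarrow> dist t \<tau> < \<delta> \<Longrightarrow> dist (fst (g t)) (fst (g \<tau>)) < \<eta>"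
    proof -
      have "\<tau> \<in> {0..1}" using t01 by simp
      from cx[unfolded continuous_on_iff, rule_format, OF this eta] show ?thesis using that by blast
    qed
    define s where "s = max (\<tau>/2) (\<tau> - \<delta>/2)"
    have s: "0 \<le> s" "s < \<tau>" "s \<le> 1" "dist s \<tau> < \<delta>" using tpos d t01 unfolding s_def dist_real_def by auto
    have xs: "fst (g s) > b - \<eta>" using dd[of s] s xt unfolding dist_real_def by auto
    have xsb: "fst (g s) < b" using bel s by auto
    have lp: "Sfun b (g 0) - Sfun b (g s) \<le> L"
      by (rule lower_piece[OF cg S0(1) gdiff vnn fE vpos HL s(1) s(3)]) (use bel s in auto)
    have "Sfun b (g s) = Sfun b (fst (g s), snd (g s))" by simp
    also have "\<dots> \<le> 2 * sqrt ((b - fst (g s)) * (pi/2))"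
      using Sfun_bound(2)[OF xsb vnn[of s]] s by simp
    also have "\<dots> \<le> 2 * sqrt (\<eta> * (pi/2))"
      using xs xsb by (intro mult_left_mono real_sqrt_le_mono mult_right_mono) auto
    also have "\<dots> = e"
    proof -
      have "\<eta> * (pi/2) = (e/2)^2" unfolding \<eta>_def by (simp add: field_simps power2_eq_square)
      thus ?thesis using e by simp
    qed
    finally show "Sfun b (0, 1) \<le> L + e" using lp g0 by simp
  qed
qed



lemma cos_one_cases: assumes "cos x = 1" "0 \<le> x" "x < 4*pi" shows "x = 0 \<or> x = 2*pi"
proof -
  obtain n :: int where n: "x = real_of_int n * 2 * pi" using assms(1) unfolding cos_one_2pi_int by blast
  have "real_of_int n * (2*pi) \<ge> 0" using n assms by simp
  hence n0: "n \<ge> 0" using pi_gt_zero by (simp add: zero_le_mult_iff)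
  have "real_of_int n * (2*pi) < 2 * (2*pi)" using n assms by simp
  hence "real_of_int n < 2" using pi_gt_zero by (simp only: mult_less_cancel_right)
  hence "n \<le> 1" by simp
  hence "n = 0 \<or> n = 1" using n0 by auto
  thus ?thesis using n by auto
qed

lemma cos_ne_one: assumes "0 < x" "x < 2*pi" shows "cos x < 1"
proof -
  have "cos x \<noteq> 1" using cos_one_cases[of x] assms by auto
  thus ?thesis using cos_le_one[of x] by linarith
qed

definition cyc :: "real \<Rightarrow> real \<Rightarrow> real \<Rightarrow> real \<Rightarrow> real \<times> real" where
  "cyc a th p1 t = (a * ((p1 + th * t) - sin (p1 + th * t)) - a * (p1 - sin p1), a * (1 - cos (p1 + th * t)))"

definition cycd :: "real \<Rightarrow> real \<Rightarrow> real \<Rightarrow> real \<Rightarrow> real \<times> real" where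
  "cycd a th p1 t = (a * th * (1 - cos (p1 + th * t)), a * th * sin (p1 + th * t))"

lemma cyc_deriv: "(cyc a th p1 has_vector_derivative cycd a th p1 t) (at t)"
proof -
  have "((\<lambda>t. a * ((p1 + th * t) - sin (p1 + th * t)) - a * (p1 - sin p1)) has_real_derivative a * th * (1 - cos (p1 + th * t))) (at t)"
    by (auto intro!: derivative_eq_intros simp: algebra_simps)
  moreover have "((\<lambda>t. a * (1 - cos (p1 + th * t))) has_real_derivative a * th * sin (p1 + th * t)) (at t)"
    by (auto intro!: derivative_eq_intros simp: algebra_simps)
  ultimately show ?thesis unfolding cyc_def[abs_def] cycd_def
    by (intro has_vector_derivative_Pair) (auto simp: has_real_derivative_iff_has_vector_derivative)
qed

lemma cyc_C1: "cyc a th p1 piecewise_C1_differentiable_on {0..1}"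
proof (rule C1_differentiable_imp_piecewise)
  show "cyc a th p1 C1_differentiable_on {0..1}" unfolding C1_differentiable_on_def
  proof (intro exI conjI ballI)
    show "\<And>x. x \<in> {0..1} \<Longrightarrow> (cyc a th p1 has_vector_derivative cycd a th p1 x) (at x)" by (rule cyc_deriv)
    show "continuous_on {0..1} (cycd a th p1)" unfolding cycd_def[abs_def] by (intro continuous_intros)
  qed
qed

lemma cyc_integrand:
  assumes a: "a > 0" and th: "th > 0" and c: "cos (p1 + th * t) < 1"
  shows "norm (vector_derivative (cyc a th p1) (at t)) / sqrt (snd (cyc a th p1 t)) = th * sqrt (2 * a)"
proof -
  define q where "q = 1 - cos (p1 + th * t)"
  have q0: "q > 0" using c unfolding q_def by simp
  have vd: "vector_derivative (cyc a th p1) (at t) = cycd a th p1 t" by (rule vector_derivative_at[OF cyc_deriv])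
  have "(a * th * q)^2 + (a * th * sin (p1 + th * t))^2 = (a*th)^2 * (q^2 + (sin (p1 + th * t))^2)"
    by (simp add: power_mult_distrib algebra_simps)
  also have "q^2 + (sin (p1 + th * t))^2 = 2 * q" unfolding q_def
    using sin_cos_squared_add[of "p1 + th * t"] by (simp add: power2_eq_square algebra_simps)
  finally have nsq: "(a * th * q)^2 + (a * th * sin (p1 + th * t))^2 = (a*th)^2 * (2 * q)" .
  have "norm (cycd a th p1 t) = sqrt ((a*th)^2 * (2 * q))"
    unfolding cycd_def q_def[symmetric] by (simp add: norm_Pair nsq[symmetric])
  also have "\<dots> = a * th * (sqrt 2 * sqrt q)" using a th by (simp add: real_sqrt_mult)
  finally have n: "norm (cycd a th p1 t) = a * th * (sqrt 2 * sqrt q)" .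
  have s: "sqrt (snd (cyc a th p1 t)) = sqrt a * sqrt q" unfolding cyc_def q_def[symmetric] by (simp add: real_sqrt_mult)
  have "a * th * (sqrt 2 * sqrt q) / (sqrt a * sqrt q) = th * (sqrt 2 * sqrt a)"
  proof -
    have "sqrt a * sqrt a = a" using a by simp
    thus ?thesis using a q0 by (simp add: field_simps)
  qed
  thus ?thesis unfolding vd n s by (simp add: real_sqrt_mult)
qed

lemma cyc_props:
  assumes a: "a > 0" and th: "0 < th" "th \<le> pi" and p: "0 \<le> p1" "p1 < 2*pi"
  shows "has_H_length (cyc a th p1) (th * sqrt (2 * a))"
    and "\<And>t. snd (cyc a th p1 t) \<ge> 0"
    and "\<exists>E. finite E \<and> (\<forall>t\<in>{0..1} - E. snd (cyc a th p1 t) > 0)"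
proof -
  define E where "E = {t. cos (p1 + th * t) = 1} \<inter> {0..1}"
  have Esub: "E \<subseteq> {- p1 / th, (2*pi - p1) / th}"
  proof
    fix t assume t: "t \<in> E"
    have "0 \<le> p1 + th * t" "p1 + th * t < 4*pi" using t th p unfolding E_def
      by (auto intro!: add_nonneg_nonneg) (smt (verit, best) mult_left_le)
    hence "p1 + th * t = 0 \<or> p1 + th * t = 2*pi" using cos_one_cases t unfolding E_def by auto
    thus "t \<in> {- p1 / th, (2*pi - p1) / th}" using th by (auto simp: field_simps)
  qed
  have fE: "finite E" using finite_subset[OF Esub] by simp
  have pos: "snd (cyc a th p1 t) > 0" if "t \<in> {0..1} - E" for t
  proof -
    have "cos (p1 + th * t) \<noteq> 1" using that unfolding E_def by auto
    hence "cos (p1 + th * t) < 1" using cos_le_one[of "p1 + th * t"] by linarith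
    thus ?thesis unfolding cyc_def using a by simp
  qed
  thus "\<exists>E. finite E \<and> (\<forall>t\<in>{0..1} - E. snd (cyc a th p1 t) > 0)" using fE by blast
  show "\<And>t. snd (cyc a th p1 t) \<ge> 0" unfolding cyc_def using a by simp
  define K where "K = th * sqrt (2 * a)"
  have "((\<lambda>t::real. K) has_integral K) {0..1}"
    using has_integral_const_real[where c=K and a=0 and b=1] by simp
  hence "((\<lambda>t::real. th * sqrt (2 * a)) has_integral th * sqrt (2 * a)) {0..1}" unfolding K_def .
  thus "has_H_length (cyc a th p1) (th * sqrt (2 * a))" unfolding has_H_length_def
  proof (rule has_integral_spike_finite[OF fE, rotated])
    fix t assume "t \<in> {0..1} - E"
    hence "cos (p1 + th * t) \<noteq> 1" unfolding E_def by auto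
    hence "cos (p1 + th * t) < 1" using cos_le_one[of "p1 + th * t"] by linarith
    thus "norm (vector_derivative (cyc a th p1) (at t)) / sqrt (snd (cyc a th p1 t)) = th * sqrt (2 * a)"
      by (rule cyc_integrand[OF a th(1)])
  qed
qed



lemma sin_lt_x: fixes x :: real assumes "0 < x" shows "sin x < x"
proof (cases "x < 2*pi")
  case True
  have "(\<lambda>x. x - sin x) 0 < (\<lambda>x. x - sin x) x"
  proof (rule DERIV_pos_imp_increasing_open[OF assms])
    fix y assume y: "0 < y" "y < x"
    have "DERIV (\<lambda>x. x - sin x) y :> 1 - cos y" by (auto intro!: derivative_eq_intros)
    moreover have "cos y < 1" using cos_ne_one[of y] y True by simp
    ultimately show "\<exists>z. DERIV (\<lambda>x. x - sin x) y :> z \<and> 0 < z" by auto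
  next
    show "continuous_on {0..x} (\<lambda>x. x - sin x)" by (intro continuous_intros)
  qed
  thus ?thesis by simp
next
  case False
  hence "x > 1" using pi_gt3 by simp
  thus ?thesis using sin_le_one[of x] by linarith
qed

lemma taylor1: fixes x :: real assumes "0 \<le> x" shows "cos x - 1 + x^2/2 \<ge> 0"
proof -
  have "(\<lambda>x. cos x - 1 + x^2/2) 0 \<le> (\<lambda>x. cos x - 1 + x^2/2) x"
  proof (rule DERIV_nonneg_imp_nondecreasing[OF assms])
    fix y assume y: "0 \<le> y" "y \<le> x"
    have "DERIV (\<lambda>x. cos x - 1 + x^2/2) y :> - sin y + y" by (auto intro!: derivative_eq_intros)
    moreover have "- sin y + y \<ge> 0" using sin_x_le_x[OF y(1)] by simp
    ultimately show "\<exists>z. DERIV (\<lambda>x. cos x - 1 + x^2/2) y :> z \<and> 0 \<le> z" by auto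
  qed
  thus ?thesis by simp
qed

lemma taylor2: fixes x :: real assumes "0 \<le> x" shows "sin x - x + x^3/6 \<ge> 0"
proof -
  have "(\<lambda>x. sin x - x + x^3/6) 0 \<le> (\<lambda>x. sin x - x + x^3/6) x"
  proof (rule DERIV_nonneg_imp_nondecreasing[OF assms])
    fix y assume y: "0 \<le> y" "y \<le> x"
    have "DERIV (\<lambda>x. sin x - x + x^3/6) y :> cos y - 1 + y^2/2"
      by (auto intro!: derivative_eq_intros simp: power2_eq_square)
    moreover have "cos y - 1 + y^2/2 \<ge> 0" using taylor1[OF y(1)] by simp
    ultimately show "\<exists>z. DERIV (\<lambda>x. sin x - x + x^3/6) y :> z \<and> 0 \<le> z" by auto
  qed
  thus ?thesis by simp
qed

lemma taylor3: fixes x :: real assumes "0 \<le> x" shows "1 - x^2/2 + x^4/24 - cos x \<ge> 0"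
proof -
  have "(\<lambda>x. 1 - x^2/2 + x^4/24 - cos x) 0 \<le> (\<lambda>x. 1 - x^2/2 + x^4/24 - cos x) x"
  proof (rule DERIV_nonneg_imp_nondecreasing[OF assms])
    fix y assume y: "0 \<le> y" "y \<le> x"
    have "DERIV (\<lambda>x. 1 - x^2/2 + x^4/24 - cos x) y :> sin y - y + y^3/6"
      by (auto intro!: derivative_eq_intros simp: power2_eq_square power3_eq_cube)
    moreover have "sin y - y + y^3/6 \<ge> 0" using taylor2[OF y(1)] by simp
    ultimately show "\<exists>z. DERIV (\<lambda>x. 1 - x^2/2 + x^4/24 - cos x) y :> z \<and> 0 \<le> z" by auto
  qed
  thus ?thesis by simp
qed

lemma sin_minus_xcos: fixes x :: real assumes "0 \<le> x" "x \<le> pi" shows "sin x - x * cos x \<ge> 0"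
proof -
  have "(\<lambda>x. sin x - x * cos x) 0 \<le> (\<lambda>x. sin x - x * cos x) x"
  proof (rule DERIV_nonneg_imp_nondecreasing[OF assms(1)])
    fix y assume y: "0 \<le> y" "y \<le> x"
    have "DERIV (\<lambda>x. sin x - x * cos x) y :> y * sin y"
      by (auto intro!: derivative_eq_intros)
    moreover have "y * sin y \<ge> 0" using y assms by (auto intro!: mult_nonneg_nonneg sin_ge_zero)
    ultimately show "\<exists>z. DERIV (\<lambda>x. sin x - x * cos x) y :> z \<and> 0 \<le> z" by auto
  qed
  thus ?thesis by simp
qed

lemma T1: fixes x :: real assumes "0 \<le> x" "x \<le> pi" shows "2 - 2 * cos x - x * sin x \<ge> 0"
proof -
  have "(\<lambda>x. 2 - 2 * cos x - x * sin x) 0 \<le> (\<lambda>x. 2 - 2 * cos x - x * sin x) x"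
  proof (rule DERIV_nonneg_imp_nondecreasing[OF assms(1)])
    fix y assume y: "0 \<le> y" "y \<le> x"
    have "DERIV (\<lambda>x. 2 - 2 * cos x - x * sin x) y :> sin y - y * cos y"
      by (auto intro!: derivative_eq_intros)
    moreover have "sin y - y * cos y \<ge> 0" using y assms by (intro sin_minus_xcos) auto
    ultimately show "\<exists>z. DERIV (\<lambda>x. 2 - 2 * cos x - x * sin x) y :> z \<and> 0 \<le> z" by auto
  qed
  thus ?thesis by simp
qed

lemma T2: fixes x :: real assumes "0 < x" "x \<le> pi" shows "(x/2 - sin x) * (x - sin x) + (1 - cos x)^2 > 0"
proof (cases "sin x \<le> x/2")
  case True
  have "(x/2 - sin x) * (x - sin x) \<ge> 0" using True sin_x_le_x[of x] assms by simp
  moreover have "cos x < 1" using cos_ne_one[of x] assms pi_gt3 by simp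
  hence "(1 - cos x)^2 > 0" by simp
  ultimately show ?thesis by linarith
next
  case False
  hence x2: "x < 2" using sin_le_one[of x] by linarith
  have e0: "x - sin x \<ge> 0" using sin_x_le_x[of x] assms by simp
  have e1: "x - sin x \<le> x^3/6" using taylor2[of x] assms by simp
  have f1: "x/2 - sin x \<ge> - (x/2)" using sin_x_le_x[of x] assms by simp
  have "(x/2 - sin x) * (x - sin x) \<ge> - (x/2) * (x - sin x)"
    using f1 e0 by (intro mult_right_mono) auto
  moreover have "- (x/2) * (x - sin x) \<ge> - (x/2) * (x^3/6)"
    using e1 assms by (intro mult_left_mono_neg) auto
  moreover have "- (x/2) * (x^3/6) = - (x^4/12)" by (simp add: power3_eq_cube power4_eq_xxxx)
  ultimately have A: "(x/2 - sin x) * (x - sin x) \<ge> - (x^4/12)" by linarith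
  have "1 - cos x \<ge> x^2/2 - x^4/24" using taylor3[of x] assms by simp
  moreover have "x^4/24 \<le> x^2/6"
  proof -
    have "x^2 \<le> 2^2" using x2 assms by (intro power_mono) auto
    hence "x^2 \<le> 4" by simp
    hence "x^2 * x^2 \<le> x^2 * 4" by (intro mult_left_mono) auto
    thus ?thesis by (simp add: power4_eq_xxxx power2_eq_square)
  qed
  ultimately have "1 - cos x \<ge> x^2/3" by simp
  hence "(1 - cos x)^2 \<ge> (x^2/3)^2" using assms by (intro power_mono) auto
  moreover have "(x^2/3)^2 = x^4/9" by (simp add: power4_eq_xxxx power2_eq_square)
  ultimately have B: "(1 - cos x)^2 \<ge> x^4/9" by simp
  have "x^4 > 0" using assms by simp
  thus ?thesis using A B by linarith
qed



lemma Lam_ge: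
  assumes th: "0 < th" "th \<le> pi" and b2: "th / 2 \<le> b" and b0: "0 < b"
  shows "(Sfun b (0, 1))^2 / 2 \<le> Lambda b th"
proof -
  define s where "s = sin th"
  define c where "c = cos th"
  define e where "e = th - s"
  define q where "q = 1 - c"
  define y where "y = b - s"
  have sc: "s^2 + c^2 = 1" unfolding s_def c_def by simp
  have e0: "e > 0" unfolding e_def s_def using sin_lt_x[OF th(1)] by simp
  have q0: "q > 0" unfolding q_def c_def using cos_ne_one[of th] th pi_gt3 by simp
  define disc where "disc = 2 * e * b + 2 * q - th^2"
  have disc_eq: "2 * (th - sin th) * b + 2 * (1 - cos th) - th^2 = disc"
    unfolding disc_def e_def q_def s_def c_def by simp
  have discf: "disc = 2 * y * e + q^2 - e^2"
  proof -
    have "disc = 2 * y * e + q^2 - e^2 + (1 - s^2 - c^2)"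
      unfolding disc_def y_def e_def q_def by (simp add: power2_eq_square algebra_simps)
    thus ?thesis using sc by simp
  qed
  have disc0: "disc \<ge> 0"
  proof -
    have "2 * e * b \<ge> e * th" using e0 b2 by simp
    moreover have "2 - 2 * c - th * s \<ge> 0" using T1[of th] th unfolding c_def s_def by simp
    ultimately show ?thesis unfolding disc_def e_def q_def by (simp add: power2_eq_square algebra_simps)
  qed
  define r where "r = sqrt disc"
  have r0: "r \<ge> 0" and r2: "r^2 = disc" using disc0 unfolding r_def by auto
  define B0 where "B0 = e * b + 2 * q - th * s"
  have B0f: "B0 = y * e + q^2"
  proof -
    have "B0 = y * e + q^2 + (1 - s^2 - c^2)"
      unfolding B0_def y_def e_def q_def by (simp add: power2_eq_square algebra_simps)
    thus ?thesis using sc by simp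
  qed
  define P where "P = y^2 + q^2"
  have P0: "P > 0" unfolding P_def using q0 by (simp add: add_nonneg_pos)
  have ident: "B0^2 - q^2 * disc = e^2 * P"
    unfolding B0f discf P_def by (simp add: power2_eq_square algebra_simps)
  have B0pos: "B0 > 0"
  proof -
    have "y * e \<ge> (th/2 - s) * e" unfolding y_def using b2 e0 by (intro mult_right_mono) auto
    moreover have "(th/2 - s) * e + q^2 > 0" using T2[OF th] unfolding s_def e_def q_def c_def by simp
    ultimately show ?thesis unfolding B0f by linarith
  qed
  have qr: "q * r < B0"
  proof -
    have "(q * r)^2 = q^2 * disc" using r2 by (simp add: power_mult_distrib)
    also have "\<dots> < B0^2"
    proof -
      have "e^2 * P > 0" using P0 e0 by simp
      thus ?thesis using ident by linarith
    qed
    finally have "(q * r)^2 < B0^2" .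
    thus ?thesis using B0pos q0 r0 by (meson abs_le_square_iff not_le power2_less_imp_less less_le)
  qed
  define m where "m = (B0 - q * r) / e^2"
  have m0: "m > 0" unfolding m_def using qr e0 by simp
  have L1: "Lambda b th = th\<^sup>2 / (th - sin th)\<^sup>2 *
     ((th - sin th) * b + 2 * (1 - cos th) - th * sin th - (1 - cos th) * r)"
    unfolding Lambda_def disc_eq r_def ..
  have Lam: "Lambda b th = th^2 * m"
    unfolding L1 m_def B0_def e_def[symmetric] s_def[symmetric] c_def[symmetric] q_def[symmetric]
    using e0 by (simp add: field_simps)
  have quad: "e^2 * m^2 - 2 * m * B0 + P = 0"
  proof -
    have em: "e^2 * m = B0 - q * r" unfolding m_def using e0 by simp
    have "e^2 * m^2 = (e^2 * m) * m" by (simp add: power2_eq_square)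
    also have "\<dots> = m * (B0 - q * r)" unfolding em by simp
    finally have "e^2 * m^2 = m * (B0 - q * r)" .
    hence "e^2 * m^2 - 2 * m * B0 + P = P - m * (B0 + q * r)" by (simp add: algebra_simps)
    also have "m * (B0 + q * r) = (B0^2 - q^2 * r^2) / e^2"
      unfolding m_def using e0 by (simp add: field_simps power2_eq_square)
    also have "\<dots> = P" using ident r2 e0 by simp
    finally show ?thesis by simp
  qed
  define K where "K = 1 / m"
  define c1 where "c1 = 1 - K"
  define s1 where "s1 = (K * y - e) / q"
  have cs1: "c1^2 + s1^2 = 1"
  proof -
    have "m^2 * q^2 * (c1^2 + s1^2) = q^2 * (m - 1)^2 + (y - e * m)^2"
      unfolding c1_def s1_def K_def using m0 q0 by (simp add: field_simps power2_eq_square)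
    also have "\<dots> = m^2 * q^2 + (e^2 * m^2 - 2 * m * (y * e + q^2) + y^2 + q^2)"
      by (simp add: power2_eq_square algebra_simps)
    also have "e^2 * m^2 - 2 * m * (y * e + q^2) + y^2 + q^2 = 0"
      using quad unfolding B0f P_def by simp
    finally have "m^2 * q^2 * (c1^2 + s1^2) = m^2 * q^2 * 1" by simp
    thus ?thesis using m0 q0 by simp
  qed
  obtain p1 where p1: "0 \<le> p1" "p1 < 2*pi" "c1 = cos p1" "s1 = sin p1"
    using sincos_total_2pi[OF cs1] by blast
  define g where "g = cyc m th p1"
  have hl: "has_H_length g (th * sqrt (2 * m))" and vnn: "\<And>t. snd (g t) \<ge> 0"
    and ex: "\<exists>E. finite E \<and> (\<forall>t\<in>{0..1} - E. snd (g t) > 0)"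
    unfolding g_def using cyc_props[OF m0 th p1(1,2)] by auto
  obtain E where fE: "finite E" and vpos: "\<And>t. t \<in> {0..1} - E \<Longrightarrow> snd (g t) > 0" using ex by blast
  have g0: "g 0 = (0, 1)"
  proof -
    have "m * (1 - cos p1) = m * K" using p1 unfolding c1_def by simp
    also have "\<dots> = 1" unfolding K_def using m0 by simp
    finally show ?thesis unfolding g_def cyc_def by simp
  qed
  have g1: "fst (g 1) = b"
  proof -
    have "fst (g 1) = m * (th + s1 * q - c1 * s)"
      unfolding g_def cyc_def using p1 unfolding q_def c_def s_def
      by (simp add: sin_add algebra_simps)
    also have "th + s1 * q - c1 * s = K * b"
      unfolding s1_def c1_def using q0 unfolding y_def e_def by (simp add: field_simps)
    also have "m * (K * b) = b" unfolding K_def using m0 by simp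
    finally show ?thesis .
  qed
  have lb: "Sfun b (0, 1) \<le> th * sqrt (2 * m)"
    by (rule lower_bound[OF b0 _ g0 g1 _ fE vpos hl]) (use vnn in \<open>auto simp: g_def cyc_C1\<close>)
  have S0: "Sfun b (0, 1) \<ge> 0" using Sfun_bound(1)[of 0 b 1] b0 by simp
  have "(Sfun b (0, 1))^2 \<le> (th * sqrt (2 * m))^2" using lb S0 by (intro power_mono) auto
  also have "\<dots> = th^2 * (2 * m)" using m0 by (simp add: power_mult_distrib)
  finally show ?thesis unfolding Lam by simp
qed



lemma line_curve:
  assumes v: "v \<ge> 0"
  shows "\<exists>g L. admissible_curve g (0, 1) (b, v) \<and> has_H_length g L"
proof -
  define g where "g t = (b * t, 1 + (v - 1) * t)" for t :: real
  have gd: "(g has_vector_derivative (b, v - 1)) (at t)" for t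
  proof -
    have "((\<lambda>t. b * t) has_real_derivative b) (at t)" by (auto intro!: derivative_eq_intros)
    moreover have "((\<lambda>t. 1 + (v - 1) * t) has_real_derivative v - 1) (at t)" by (auto intro!: derivative_eq_intros)
    ultimately show ?thesis unfolding g_def[abs_def]
      by (intro has_vector_derivative_Pair) (auto simp: has_real_derivative_iff_has_vector_derivative)
  qed
  have vd: "vector_derivative g (at t) = (b, v - 1)" for t by (rule vector_derivative_at[OF gd])
  have pc: "g piecewise_C1_differentiable_on {0..1}"
  proof (rule C1_differentiable_imp_piecewise)
    show "g C1_differentiable_on {0..1}" unfolding C1_differentiable_on_def
      by (intro exI[of _ "\<lambda>t. (b, v - 1)"] conjI ballI gd continuous_intros)
  qed
  have adm: "admissible_curve g (0, 1) (b, v)"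
    unfolding admissible_curve_def
  proof (intro conjI pc ballI)
    show "g 0 = (0, 1)" "g 1 = (b, v)" unfolding g_def by auto
    fix t :: real assume t: "t \<in> {0<..<1}"
    have "(1 - t) + v * t > 0" using t v by (intro add_pos_nonneg) auto
    thus "snd (g t) > 0" unfolding g_def by (simp add: algebra_simps)
  qed
  define N where "N = norm (b, v - 1)"
  have integ: "(\<lambda>t. norm (vector_derivative g (at t)) / sqrt (snd (g t))) = (\<lambda>t. N / sqrt (1 + (v - 1) * t))"
    by (rule ext) (simp only: vd N_def g_def snd_conv)
  have pos: "1 + (v - 1) * t > 0" if "t \<in> {0<..<1}" for t
  proof -
    have "(1 - t) + v * t > 0" using that v by (intro add_pos_nonneg) auto
    thus ?thesis by (simp add: algebra_simps)
  qed
  show ?thesis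
  proof (cases "v = 1")
    case True
    have "((\<lambda>t::real. N) has_integral N) {0..1}"
      using has_integral_const_real[where c=N and a=0 and b=1] by simp
    moreover have "(\<lambda>t::real. N / sqrt (1 + (v - 1) * t)) = (\<lambda>t. N)" using True by simp
    ultimately have "has_H_length g N" unfolding has_H_length_def integ by simp
    thus ?thesis using adm by blast
  next
    case False
    define F where "F t = 2 * N * sqrt (1 + (v - 1) * t) / (v - 1)" for t
    have "((\<lambda>t. N / sqrt (1 + (v - 1) * t)) has_integral (F 1 - F 0)) {0..1}"
    proof (rule fundamental_theorem_of_calculus_interior)
      have "1 + (v - 1) * t \<ge> 0" if "t \<in> {0..1}" for t
      proof -
        have "(1 - t) + v * t \<ge> 0" using that v by (intro add_nonneg_nonneg) auto
        thus ?thesis by (simp add: algebra_simps)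
      qed
      show "continuous_on {0..1} F" unfolding F_def[abs_def]
        by (intro continuous_on_divide continuous_on_mult continuous_on_const continuous_on_real_sqrt
            continuous_on_add continuous_on_id) (use False in auto)
      fix t :: real assume t: "t \<in> {0<..<1}"
      have p: "1 + (v - 1) * t > 0" using pos[OF t] .
      have d1: "DERIV (\<lambda>t. 1 + (v - 1) * t) t :> v - 1" by (auto intro!: derivative_eq_intros)
      have d2: "DERIV (\<lambda>t. sqrt (1 + (v - 1) * t)) t :> inverse (sqrt (1 + (v - 1) * t)) / 2 * (v - 1)"
        by (rule DERIV_chain2[OF DERIV_real_sqrt[OF p] d1])
      have d3: "DERIV F t :> 2 * N * (inverse (sqrt (1 + (v - 1) * t)) / 2 * (v - 1)) / (v - 1)"
        unfolding F_def[abs_def] by (intro DERIV_cdivide DERIV_cmult d2)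
      define z where "z = sqrt (1 + (v - 1) * t)"
      have vv: "v - 1 \<noteq> 0" using False by simp
      have "2 * N * (inverse z / 2 * (v - 1)) / (v - 1) = N / z"
      proof (cases "z = 0")
        case True thus ?thesis by simp
      next
        case False thus ?thesis using vv by (simp add: field_simps)
      qed
      hence "DERIV F t :> N / sqrt (1 + (v - 1) * t)" using d3 unfolding z_def by simp
      thus "(F has_vector_derivative N / sqrt (1 + (v - 1) * t)) (at t)"
        by (simp add: has_real_derivative_iff_has_vector_derivative)
    qed auto
    hence "has_H_length g (F 1 - F 0)" unfolding has_H_length_def integ .
    thus ?thesis using adm by blast
  qed
qed

lemma len_nonneg:
  assumes "admissible_curve g (0, 1) q" "snd q \<ge> 0" "has_H_length g L" shows "L \<ge> 0"
proof -
  have "snd (g t) \<ge> 0" if "t \<in> {0..1}" for t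
  proof -
    have c: "t = 0 \<or> t = 1 \<or> t \<in> {0<..<1}" using that by auto
    have a: "g 0 = (0, 1)" "g 1 = q" "\<And>t. t \<in> {0<..<1} \<Longrightarrow> snd (g t) > 0"
      using assms(1) unfolding admissible_curve_def by auto
    have "snd (g 0) \<ge> 0" "snd (g 1) \<ge> 0" using a(1,2) assms(2) by auto
    thus ?thesis using c a(3)[of t] by (metis less_imp_le)
  qed
  hence nn: "\<And>t. t \<in> {0..1} \<Longrightarrow> 0 \<le> norm (vector_derivative g (at t)) / sqrt (snd (g t))"
    by simp
  show ?thesis using assms(3) unfolding has_H_length_def
    by (rule has_integral_nonneg) (rule nn)
qed

lemma dH_le:
  assumes "admissible_curve g (0, 1) q" "snd q \<ge> 0" "has_H_length g L" shows "dH (0, 1) q \<le> L"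
  unfolding dH_def
proof (rule cInf_lower)
  show "L \<in> {L. \<exists>g. admissible_curve g (0, 1) q \<and> has_H_length g L}" using assms by blast
  show "bdd_below {L. \<exists>g. admissible_curve g (0, 1) q \<and> has_H_length g L}"
    using len_nonneg assms(2) by (intro bdd_belowI[of _ 0]) blast
qed

lemma dH_ge:
  assumes b0: "b > 0" and v: "v \<ge> 0" shows "Sfun b (0, 1) \<le> dH (0, 1) (b, v)"
  unfolding dH_def
proof (rule cInf_greatest)
  show "{L. \<exists>g. admissible_curve g (0, 1) (b, v) \<and> has_H_length g L} \<noteq> {}"
    using line_curve[OF v, of b] by blast
  fix L assume "L \<in> {L. \<exists>g. admissible_curve g (0, 1) (b, v) \<and> has_H_length g L}"
  then obtain g where adm: "admissible_curve g (0, 1) (b, v)" and hl: "has_H_length g L" by blast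
  have pc: "g piecewise_C1_differentiable_on {0..1}" and g0: "g 0 = (0, 1)" and g1: "g 1 = (b, v)"
    and int: "\<And>t. t \<in> {0<..<1} \<Longrightarrow> snd (g t) > 0"
    using adm unfolding admissible_curve_def by auto
  have h1: "fst (g 1) = b" using g1 by simp
  have h2: "snd (g t) \<ge> 0" if "t \<in> {0..1}" for t
  proof -
    have "t = 0 \<or> t = 1 \<or> t \<in> {0<..<1}" using that by auto
    moreover have "snd (g 0) \<ge> 0" "snd (g 1) \<ge> 0" using g0 g1 v by auto
    ultimately show "snd (g t) \<ge> 0" using int[of t] by (metis less_imp_le)
  qed
  have h3: "snd (g t) > 0" if "t \<in> {0..1} - {1}" for t
  proof -
    have "t = 0 \<or> t \<in> {0<..<1}" using that by auto
    moreover have "snd (g 0) > 0" using g0 by simp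
    ultimately show "snd (g t) > 0" using int[of t] by metis
  qed
  have fin: "finite {1::real}" by simp
  show "Sfun b (0, 1) \<le> L" by (rule lower_bound[OF b0 pc g0 h1 h2 fin h3 hl])
qed



lemma Lam_star:
  assumes th: "0 < th" "th < pi" and b: "b = (th + sin th) / (1 + cos th)"
  shows "Lambda b th = th^2 / (1 + cos th)"
proof -
  define s where "s = sin th"
  define c where "c = cos th"
  have sc: "s^2 = (1 - c) * (1 + c)" unfolding s_def c_def using sin_cos_squared_add[of th]
    by (simp add: power2_eq_square algebra_simps)
  have s0: "s \<ge> 0" unfolding s_def using th by (intro sin_ge_zero) auto
  have "cos pi < cos th" using th by (intro cos_monotone_0_pi) auto
  hence c1: "1 + c > 0" unfolding c_def by simp
  have e0: "th - s > 0" unfolding s_def using sin_lt_x[OF th(1)] by simp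
  have bb: "b * (1 + c) = th + s" unfolding b s_def c_def using c1 unfolding c_def by simp
  define disc where "disc = 2 * (th - s) * b + 2 * (1 - c) - th^2"
  have d1: "disc * (1 + c) = th^2 * (1 - c)"
  proof -
    have "disc * (1 + c) = 2 * (th - s) * (b * (1 + c)) + 2 * (1 - c) * (1 + c) - th^2 * (1 + c)"
      unfolding disc_def by (simp add: algebra_simps)
    also have "\<dots> = 2 * (th - s) * (th + s) + 2 * s^2 - th^2 * (1 + c)" unfolding bb sc by simp
    also have "\<dots> = th^2 * (1 - c)" by (simp add: power2_eq_square algebra_simps)
    finally show ?thesis .
  qed
  have sq: "sqrt disc = th * s / (1 + c)"
  proof -
    have "disc = (th * s / (1 + c))^2"
    proof -
      have "(th * s / (1 + c))^2 = th^2 * s^2 / (1 + c)^2" by (simp add: power_divide power_mult_distrib)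
      also have "\<dots> = th^2 * (1 - c) / (1 + c)" unfolding sc using c1 by (simp add: power2_eq_square)
      also have "\<dots> = disc" using d1 c1 by (simp add: field_simps)
      finally show ?thesis by simp
    qed
    moreover have "th * s / (1 + c) \<ge> 0" using th s0 c1 by simp
    ultimately show ?thesis by (intro real_sqrt_unique) auto
  qed
  define B where "B = (th - s) * b + 2 * (1 - c) - th * s - (1 - c) * sqrt disc"
  have B1: "B * (1 + c) = (th - s)^2"
  proof -
    have "B * (1 + c) = (th - s) * (b * (1 + c)) + 2 * (1 - c) * (1 + c) - th * s * (1 + c) - (1 - c) * (th * s)"
      unfolding B_def sq using c1 by (simp add: field_simps)
    also have "\<dots> = (th - s) * (th + s) + 2 * s^2 - th * s * (1 + c) - (1 - c) * (th * s)" unfolding bb sc by simp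
    also have "\<dots> = (th - s)^2" by (simp add: power2_eq_square algebra_simps)
    finally show ?thesis .
  qed
  have Bv: "B = (th - s)^2 / (1 + c)" using B1 c1 by (simp add: eq_divide_eq)
  have "Lambda b th = th^2 / (th - s)^2 * B"
    unfolding Lambda_def B_def disc_def s_def c_def ..
  also have "\<dots> = th^2 / (th - s)^2 * ((th - s)^2 / (1 + c))" unfolding Bv ..
  also have "\<dots> = th^2 / (1 + c)" using e0 by simp
  finally show ?thesis unfolding c_def .
qed

lemma star:
  assumes b0: "b > 0"
  shows "\<exists>th. 0 < th \<and> th < pi \<and> b = (th + sin th) / (1 + cos th) \<and>
           Dfun b 0 = Lambda b th \<and> Lambda b th = (Sfun b (0, 1))^2 / 2"
proof -
  define w where "w = om (1 / b)"
  have u0: "1 / b > 0" using b0 by simp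
  have w: "0 < w" "w < pi/2" "Uf w = 1 / b" using om_ex[of "1/b"] om_lt[OF u0] u0 unfolding w_def by auto
  define c where "c = cos w"
  define s where "s = sin w"
  have c0: "c > 0" unfolding c_def using w by (intro cos_gt_zero) auto
  have D0: "Dd w > 0" using Dd_pos[of w] w by simp
  have bD: "b = Dd w / c^2" using w(3) D0 c0 b0 unfolding Uf_def c_def by (simp add: field_simps)
  define th where "th = 2 * w"
  have th: "0 < th" "th < pi" unfolding th_def using w by auto
  have cth: "1 + cos th = 2 * c^2" unfolding th_def c_def cos_double_cos by simp
  have sth: "sin th = 2 * s * c" unfolding th_def s_def c_def sin_double by simp
  have bth: "b = (th + sin th) / (1 + cos th)"
  proof -
    have "(th + sin th) / (1 + cos th) = (2 * w + 2 * s * c) / (2 * c^2)"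
      unfolding cth sth unfolding th_def ..
    also have "\<dots> = (2 * (w + s * c)) / (2 * c^2)" by (simp add: algebra_simps)
    also have "\<dots> = (w + s * c) / c^2" by (rule mult_divide_mult_cancel_left) simp
    also have "\<dots> = b" unfolding bD Dd_def s_def c_def ..
    finally show ?thesis by simp
  qed
  have S: "Sfun b (0, 1) = 2 * w / c"
  proof -
    have "Sfun b (0, 1) = 2 * sqrt (b * Qf w)" unfolding Sfun_def w_def by simp
    also have "b * Qf w = (w / c)^2" unfolding bD Qf_def using D0 c0
      by (simp add: field_simps power2_eq_square)
    also have "sqrt ((w / c)^2) = w / c" using w c0 by simp
    finally show ?thesis by simp
  qed
  define Ds where "Ds = (Sfun b (0, 1))^2 / 2"
  have Ds_eq: "Ds = th^2 / (1 + cos th)" unfolding Ds_def S cth unfolding th_def using c0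
    by (simp add: field_simps power2_eq_square)
  have Lam: "Lambda b th = Ds" using Lam_star[OF th bth] Ds_eq by simp
  define a where "a = 1 / (1 + cos th)"
  have a0: "a > 0" unfolding a_def cth using c0 by simp
  define g where "g = cyc a th (pi - th)"
  have hl: "has_H_length g (th * sqrt (2 * a))"
    unfolding g_def using cyc_props(1)[OF a0 th(1) _ _] th by auto
  have len: "th * sqrt (2 * a) = Sfun b (0, 1)"
  proof -
    have "2 * a = (1 / c)^2" unfolding a_def cth by (simp add: power2_eq_square)
    hence "sqrt (2 * a) = 1 / c" using c0 by simp
    thus ?thesis unfolding S th_def by simp
  qed
  have g0: "g 0 = (0, 1)" unfolding g_def cyc_def a_def using cth c0 by simp
  have g1: "g 1 = (b, 2 * a)"
  proof -
    have "fst (g 1) = a * (th + sin th)" unfolding g_def cyc_def by (simp add: algebra_simps)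
    also have "\<dots> = b" unfolding bth a_def by simp
    finally show ?thesis unfolding g_def cyc_def by (simp add: prod_eq_iff)
  qed
  have adm: "admissible_curve g (0, 1) (b, 2 * a)"
    unfolding admissible_curve_def
  proof (intro conjI ballI g0 g1)
    show "g piecewise_C1_differentiable_on {0..1}" unfolding g_def by (rule cyc_C1)
    fix t :: real assume t: "t \<in> {0<..<1}"
    have t1: "th * t < th * 1" using t th by (intro mult_strict_left_mono) auto
    have t2: "th * t > 0" using t th by simp
    have "cos (pi - th + th * t) < 1" using t1 t2 th by (intro cos_ne_one; linarith)
    thus "snd (g t) > 0" unfolding g_def cyc_def using a0 by simp
  qed
  have inL: "(b, 2 * a) \<in> Lline b 0" unfolding Lline_def using a0 by simp
  have dHs: "dH (0, 1) (b, 2 * a) = Sfun b (0, 1)"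
    using dH_le[OF adm _ hl] dH_ge[OF b0, of "2 * a"] a0 len by simp
  have S0: "Sfun b (0, 1) \<ge> 0" using S w c0 by simp
  have Df: "Dfun b 0 = Ds" unfolding Dfun_def
  proof (rule antisym)
    show "Inf {(1/2) * (dH (0, 1) p)\<^sup>2 | p. p \<in> Lline b 0} \<le> Ds"
    proof (rule cInf_lower2)
      show "(1/2) * (dH (0, 1) (b, 2 * a))\<^sup>2 \<in> {(1/2) * (dH (0, 1) p)\<^sup>2 | p. p \<in> Lline b 0}"
        using inL by blast
      show "bdd_below {(1/2) * (dH (0, 1) p)\<^sup>2 | p. p \<in> Lline b 0}"
      proof (rule bdd_belowI[of _ 0])
        fix x assume "x \<in> {(1/2) * (dH (0, 1) p)\<^sup>2 | p. p \<in> Lline b 0}"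
        then obtain p where xp: "x = (1/2) * (dH (0, 1) p)\<^sup>2" by blast
        have "0 \<le> (dH (0, 1) p)\<^sup>2" by (rule zero_le_power2)
        thus "0 \<le> x" unfolding xp by simp
      qed
      show "(1/2) * (dH (0, 1) (b, 2 * a))\<^sup>2 \<le> Ds" unfolding dHs Ds_def by simp
    qed
    show "Ds \<le> Inf {(1/2) * (dH (0, 1) p)\<^sup>2 | p. p \<in> Lline b 0}"
    proof (rule cInf_greatest)
      show "{(1/2) * (dH (0, 1) p)\<^sup>2 | p. p \<in> Lline b 0} \<noteq> {}" using inL by blast
      fix x assume "x \<in> {(1/2) * (dH (0, 1) p)\<^sup>2 | p. p \<in> Lline b 0}"
      then obtain p where p: "p \<in> Lline b 0" and x: "x = (1/2) * (dH (0, 1) p)\<^sup>2" by blast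
      obtain v where pv: "p = (b, v)" and v: "v \<ge> 0" using p unfolding Lline_def by auto
      have "Sfun b (0, 1) \<le> dH (0, 1) p" unfolding pv by (rule dH_ge[OF b0 v])
      hence "(Sfun b (0, 1))^2 \<le> (dH (0, 1) p)^2" using S0 by (intro power_mono) auto
      thus "Ds \<le> x" unfolding x Ds_def by simp
    qed
  qed
  show ?thesis using th bth Df Lam unfolding Ds_def by auto
qed



lemma ranges:
  assumes th: "0 < th" "th < pi" and b: "b = (th + sin th) / (1 + cos th)"
  shows "th \<le> 2 * b" and "b < pi/2 \<Longrightarrow> b \<le> 11 * th" and "pi/2 \<le> b \<Longrightarrow> 1/7 \<le> th"
proof -
  have "cos pi < cos th" using th by (intro cos_monotone_0_pi) auto
  hence c1: "1 + cos th > 0" by simp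
  have s0: "sin th \<ge> 0" using th by (intro sin_ge_zero) auto
  have bc: "b * (1 + cos th) = th + sin th" unfolding b using c1 by simp
  have "th * (1 + cos th) \<le> 2 * (b * (1 + cos th))"
  proof -
    have "th * cos th \<le> th * 1" using th by (intro mult_left_mono) auto
    thus ?thesis unfolding bc using s0 by (simp add: algebra_simps)
  qed
  hence "th * (1 + cos th) \<le> (2 * b) * (1 + cos th)" by (simp add: algebra_simps)
  thus "th \<le> 2 * b" using c1 by simp
  have small: "b \<le> 2 * th" if "cos th \<ge> 0"
  proof -
    have "b \<le> b * (1 + cos th)"
    proof -
      have "b \<ge> 0" unfolding b using th s0 c1 by simp
      thus ?thesis using that by (simp add: mult_le_cancel_left1 algebra_simps)
    qed
    also have "\<dots> = th + sin th" by (rule bc)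
    also have "\<dots> \<le> 2 * th" using sin_x_le_x[of th] th by simp
    finally show ?thesis .
  qed
  show "b \<le> 11 * th" if bp: "b < pi/2"
  proof -
    have "cos th \<ge> 0"
    proof (rule ccontr)
      assume cn: "\<not> cos th \<ge> 0"
      have thp: "th > pi/2"
      proof (rule ccontr)
        assume "\<not> th > pi/2"
        hence "cos th \<ge> 0" using th by (intro cos_ge_zero) auto
        thus False using cn by simp
      qed
      have "th * cos th < 0" using cn th by (simp add: mult_pos_neg)
      hence "th * (1 + cos th) \<le> th + sin th" using s0 by (simp add: algebra_simps)
      hence "th * (1 + cos th) \<le> b * (1 + cos th)" using bc by simp
      hence "th \<le> b" using c1 by simp
      thus False using thp bp by simp
    qed
    thus ?thesis using small th by simp
  qed
  show "1/7 \<le> th" if bp: "pi/2 \<le> b"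
  proof (rule ccontr)
    assume "\<not> 1/7 \<le> th"
    hence t7: "th < 1/7" by simp
    hence "cos th \<ge> 0" using th pi_gt3 by (intro cos_ge_zero) auto
    hence "b \<le> 2 * th" by (rule small)
    thus False using t7 bp pi_gt3 by simp
  qed
qed

theorem theorem2p1:
  fixes \<beta> :: real
  shows "(0 < \<beta> \<and> \<beta> < pi / 2 \<longrightarrow>
           (\<exists>\<theta>0\<in>{\<beta>/11..2*\<beta>}. Dfun \<beta> 0 = Lambda \<beta> \<theta>0 \<and>
              (\<forall>\<theta>\<in>{\<beta>/11..2*\<beta>}. Lambda \<beta> \<theta>0 \<le> Lambda \<beta> \<theta>)))
       \<and> (pi / 2 \<le> \<beta> \<longrightarrow>
           (\<exists>\<theta>0\<in>{1/7..pi}. Dfun \<beta> 0 = Lambda \<beta> \<theta>0 \<and>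
              (\<forall>\<theta>\<in>{1/7..pi}. Lambda \<beta> \<theta>0 \<le> Lambda \<beta> \<theta>)))"
proof (intro conjI impI)
  assume hb: "0 < \<beta> \<and> \<beta> < pi / 2"
  hence b0: "\<beta> > 0" and bp: "\<beta> < pi/2" by auto
  obtain th where th: "0 < th" "th < pi" and bth: "\<beta> = (th + sin th) / (1 + cos th)"
    and D: "Dfun \<beta> 0 = Lambda \<beta> th" and L: "Lambda \<beta> th = (Sfun \<beta> (0, 1))^2 / 2"
    using star[OF b0] by blast
  have r1: "th \<le> 2 * \<beta>" and r2: "\<beta> \<le> 11 * th" using ranges[OF th bth] bp by auto
  show "\<exists>\<theta>0\<in>{\<beta>/11..2*\<beta>}. Dfun \<beta> 0 = Lambda \<beta> \<theta>0 \<and>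
              (\<forall>\<theta>\<in>{\<beta>/11..2*\<beta>}. Lambda \<beta> \<theta>0 \<le> Lambda \<beta> \<theta>)"
  proof (intro bexI[of _ th] conjI ballI)
    show "th \<in> {\<beta>/11..2*\<beta>}" using r1 r2 by simp
    show "Dfun \<beta> 0 = Lambda \<beta> th" by (rule D)
    fix \<theta> assume t: "\<theta> \<in> {\<beta>/11..2*\<beta>}"
    have "(Sfun \<beta> (0, 1))^2 / 2 \<le> Lambda \<beta> \<theta>"
      by (rule Lam_ge) (use t b0 bp in auto)
    thus "Lambda \<beta> th \<le> Lambda \<beta> \<theta>" using L by simp
  qed
next
  assume bp: "pi / 2 \<le> \<beta>"
  hence b0: "\<beta> > 0" using pi_gt3 by simp
  obtain th where th: "0 < th" "th < pi" and bth: "\<beta> = (th + sin th) / (1 + cos th)"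
    and D: "Dfun \<beta> 0 = Lambda \<beta> th" and L: "Lambda \<beta> th = (Sfun \<beta> (0, 1))^2 / 2"
    using star[OF b0] by blast
  have r3: "1/7 \<le> th" using ranges(3)[OF th bth bp] .
  show "\<exists>\<theta>0\<in>{1/7..pi}. Dfun \<beta> 0 = Lambda \<beta> \<theta>0 \<and>
              (\<forall>\<theta>\<in>{1/7..pi}. Lambda \<beta> \<theta>0 \<le> Lambda \<beta> \<theta>)"
  proof (intro bexI[of _ th] conjI ballI)
    show "th \<in> {1/7..pi}" using r3 th by simp
    show "Dfun \<beta> 0 = Lambda \<beta> th" by (rule D)
    fix \<theta> assume t: "\<theta> \<in> {1/7..pi}"
    have "(Sfun \<beta> (0, 1))^2 / 2 \<le> Lambda \<beta> \<theta>"
      by (rule Lam_ge) (use t b0 bp in auto)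
    thus "Lambda \<beta> th \<le> Lambda \<beta> \<theta>" using L by simp
  qed
qed


end
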